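(* Let $\pi$ be a projective plane of order $q$ and let $n>1$ be a natural number. Then for any embedding $\phi$ of the complete bipartite graph $K_{q-n,\,n^2+n+1}$ into $\pi$, the image $\phi(W)$ of the vertex class $W$ of size $n^2+n+1$ is either the point set of a subplane of $\pi$ of order $n$, or a set of points lying on a single line.
   Context: A finite projective plane of order $q$ has $q^2+q+1$ points and lines, $q+1$ points on each line and $q+1$ lines through each point; any two distinct points lie on a unique line and any two lines meet in a unique point. An embedding of a simple graph $G=(V,E)$ into $\pi$ is an injective map $\phi$ from $V$ to the points of $\pi$ such that the induced map sending an edge $ab$ to the line through $\phi(a),\phi(b)$ is injective on $E$. A subplane of order $n$ of $\pi$ is a set of points and lines of $\pi$ which, with the inherited incidence, forms a projective plane of order $n$. *)

theory Defs
  imports Main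
begin

definition projective_plane ::
  "'p set \<Rightarrow> 'l set \<Rightarrow> ('p \<Rightarrow> 'l \<Rightarrow> bool) \<Rightarrow> nat \<Rightarrow> bool" where
  "projective_plane P L I q \<longleftrightarrow>
     finite P \<and> finite L \<and>
     card P = q^2 + q + 1 \<and> card L = q^2 + q + 1 \<and>
     (\<forall>l\<in>L. card {x\<in>P. I x l} = q + 1) \<and>
     (\<forall>x\<in>P. card {l\<in>L. I x l} = q + 1) \<and>
     (\<forall>x\<in>P. \<forall>y\<in>P. x \<noteq> y \<longrightarrow> (\<exists>!l. l \<in> L \<and> I x l \<and> I y l)) \<and>
     (\<forall>l\<in>L. \<forall>m\<in>L. l \<noteq> m \<longrightarrow> (\<exists>!x. x \<in> P \<and> I x l \<and> I x m))"

definition edge_line ::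
  "'l set \<Rightarrow> ('p \<Rightarrow> 'l \<Rightarrow> bool) \<Rightarrow> ('v \<Rightarrow> 'p) \<Rightarrow> 'v set \<Rightarrow> 'l" where
  "edge_line L I \<phi> e = (THE l. l \<in> L \<and> (\<forall>v\<in>e. I (\<phi> v) l))"

definition graph_embedding ::
  "'v set \<Rightarrow> 'v set set \<Rightarrow> 'p set \<Rightarrow> 'l set \<Rightarrow> ('p \<Rightarrow> 'l \<Rightarrow> bool) \<Rightarrow> ('v \<Rightarrow> 'p) \<Rightarrow> bool" where
  "graph_embedding V E P L I \<phi> \<longleftrightarrow>
     \<phi> ` V \<subseteq> P \<and> inj_on \<phi> V \<and> inj_on (edge_line L I \<phi>) E"

definition bipartite_edges :: "'v set \<Rightarrow> 'v set \<Rightarrow> 'v set set" where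
  "bipartite_edges U W = {{u, w} | u w. u \<in> U \<and> w \<in> W}"

definition is_subplane_points ::
  "'p set \<Rightarrow> 'l set \<Rightarrow> ('p \<Rightarrow> 'l \<Rightarrow> bool) \<Rightarrow> nat \<Rightarrow> 'p set \<Rightarrow> bool" where
  "is_subplane_points P L I n S \<longleftrightarrow>
     S \<subseteq> P \<and> (\<exists>M \<subseteq> L. projective_plane S M I n)"

definition collinear_set :: "'l set \<Rightarrow> ('p \<Rightarrow> 'l \<Rightarrow> bool) \<Rightarrow> 'p set \<Rightarrow> bool" where
  "collinear_set L I S \<longleftrightarrow> (\<exists>l\<in>L. \<forall>x\<in>S. I x l)"

end

theory Submission
  imports Defs
begin

lemma double_count:
  assumes "finite A" "finite B"
  shows "(\<Sum>a\<in>A. card {b\<in>B. R a b}) = (\<Sum>b\<in>B. card {a\<in>A. R a b})"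
proof -
  have 1: "\<And>a. card {b\<in>B. R a b} = (\<Sum>b\<in>B. if R a b then 1 else 0)"
    using assms by (simp add: sum.inter_filter[symmetric])
  have 2: "\<And>b. card {a\<in>A. R a b} = (\<Sum>a\<in>A. if R a b then 1 else 0)"
    using assms by (simp add: sum.inter_filter[symmetric])
  show ?thesis unfolding 1 2 by (rule sum.swap)
qed

lemma two_elems:
  assumes "2 \<le> card A" shows "\<exists>a b. a \<in> A \<and> b \<in> A \<and> a \<noteq> b"
proof (rule ccontr)
  assume "\<not> ?thesis"
  then have "\<forall>a\<in>A. \<forall>b\<in>A. a = b" by blast
  then have "card A \<le> 1" using card_le_Suc0_iff_eq
    by (metis One_nat_def assms card.infinite not_numeral_le_zero)
  with assms show False by simp
qed

locale pplane =
  fixes P :: "'p set" and L :: "'l set" and I :: "'p \<Rightarrow> 'l \<Rightarrow> bool" and q :: nat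
  assumes pp: "projective_plane P L I q"
begin

lemma finP: "finite P" and finL: "finite L"
  and line_card: "l \<in> L \<Longrightarrow> card {x\<in>P. I x l} = q + 1"
  and pt_card: "x \<in> P \<Longrightarrow> card {l\<in>L. I x l} = q + 1"
  and line_ex: "x \<in> P \<Longrightarrow> y \<in> P \<Longrightarrow> x \<noteq> y \<Longrightarrow> \<exists>!l. l \<in> L \<and> I x l \<and> I y l"
  and pt_ex: "l \<in> L \<Longrightarrow> m \<in> L \<Longrightarrow> l \<noteq> m \<Longrightarrow> \<exists>!x. x \<in> P \<and> I x l \<and> I x m"
  using pp unfolding projective_plane_def by auto

lemma line_eq:
  assumes "x \<in> P" "y \<in> P" "x \<noteq> y" "l \<in> L" "m \<in> L" "I x l" "I y l" "I x m" "I y m"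
  shows "l = m"
  using line_ex[OF assms(1-3)] assms(4-9) by blast

definition join where "join x y = (THE l. l \<in> L \<and> I x l \<and> I y l)"

lemma join:
  assumes "x \<in> P" "y \<in> P" "x \<noteq> y"
  shows "join x y \<in> L" "I x (join x y)" "I y (join x y)"
  using theI'[OF line_ex[OF assms]] unfolding join_def by auto

lemma join_unique:
  assumes "x \<in> P" "y \<in> P" "x \<noteq> y" "l \<in> L" "I x l" "I y l"
  shows "join x y = l"
  using line_eq[OF assms(1-3) join(1)[OF assms(1-3)] assms(4) join(2,3)[OF assms(1-3)] assms(5,6)] .

lemma core:
  assumes SP: "S \<subseteq> P" and cS: "card S = n^2 + n + 1" and n1: "n > 1"
    and sec: "\<forall>w\<in>S. card {l\<in>L. I w l \<and> (\<exists>y\<in>S. y \<noteq> w \<and> I y l)} \<le> n + 1"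
    and nc: "\<not> collinear_set L I S"
  shows "is_subplane_points P L I n S"
proof -
  define M where "M = {l\<in>L. 2 \<le> card {x\<in>S. I x l}}"
  have finS: "finite S" using cS card.infinite by fastforce
  have finM: "finite M" "M \<subseteq> L" using finL unfolding M_def by auto
  have SP': "\<And>x. x \<in> S \<Longrightarrow> x \<in> P" using SP by auto
  have joinM: "join x y \<in> M" if "x \<in> S" "y \<in> S" "x \<noteq> y" for x y
  proof -
    have "{x, y} \<subseteq> {z\<in>S. I z (join x y)}"
      using join[OF SP'[OF that(1)] SP'[OF that(2)] that(3)] that by auto
    then have "card {x,y} \<le> card {z\<in>S. I z (join x y)}"
      by (rule card_mono[rotated]) (use finS in auto)
    then show ?thesis using that join[OF SP'[OF that(1)] SP'[OF that(2)] that(3)]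
      unfolding M_def by auto
  qed
  have sec_eq: "{l\<in>M. I w l} = {l\<in>L. I w l \<and> (\<exists>y\<in>S. y \<noteq> w \<and> I y l)}" if "w \<in> S" for w
  proof
    show "{l\<in>M. I w l} \<subseteq> {l\<in>L. I w l \<and> (\<exists>y\<in>S. y \<noteq> w \<and> I y l)}"
    proof
      fix l assume "l \<in> {l\<in>M. I w l}"
      then have l: "l \<in> L" "I w l" "2 \<le> card {x\<in>S. I x l}" unfolding M_def by auto
      obtain a b where "a \<in> {x\<in>S. I x l}" "b \<in> {x\<in>S. I x l}" "a \<noteq> b"
        using two_elems[OF l(3)] by blast
      then show "l \<in> {l\<in>L. I w l \<and> (\<exists>y\<in>S. y \<noteq> w \<and> I y l)}" using l by (cases "a = w") auto
    qed
  next
    show "{l\<in>L. I w l \<and> (\<exists>y\<in>S. y \<noteq> w \<and> I y l)} \<subseteq> {l\<in>M. I w l}"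
    proof
      fix l assume "l \<in> {l\<in>L. I w l \<and> (\<exists>y\<in>S. y \<noteq> w \<and> I y l)}"
      then obtain y where l: "l \<in> L" "I w l" "y \<in> S" "y \<noteq> w" "I y l" by auto
      have "join w y = l" using join_unique[OF SP'[OF that] SP'[OF l(3)] l(4)[symmetric] l(1,2,5)] .
      then show "l \<in> {l\<in>M. I w l}" using joinM[OF that l(3) l(4)[symmetric]] l by auto
    qed
  qed
  have secle: "card {l\<in>M. I w l} \<le> n + 1" if "w \<in> S" for w
    using sec that sec_eq[OF that] by auto
  have upper: "card {x\<in>S. I x l} \<le> n + 1" if lM: "l \<in> M" for l
  proof -
    obtain x where x: "x \<in> S" "\<not> I x l" using nc lM finM unfolding collinear_set_def by auto
    have inj: "inj_on (join x) {y\<in>S. I y l}"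
    proof (rule inj_onI)
      fix y y' assume y: "y \<in> {y\<in>S. I y l}" "y' \<in> {y\<in>S. I y l}" "join x y = join x y'"
      show "y = y'"
      proof (rule ccontr)
        assume ne: "y \<noteq> y'"
        have xy: "x \<noteq> y" "x \<noteq> y'" using x y by auto
        have yS: "y \<in> S" "I y l" "y' \<in> S" "I y' l" using y(1,2) by auto
        have yP: "y \<in> P" "y' \<in> P" "x \<in> P" using SP yS x(1) by auto
        have lL: "l \<in> L" using lM finM by auto
        have j1: "I y' (join x y)" using join(3)[OF yP(3,2) xy(2)] y(3) by simp
        have "join x y = l"
          by (rule line_eq[OF yP(1,2) ne join(1)[OF yP(3,1) xy(1)] lL join(3)[OF yP(3,1) xy(1)] j1 yS(2,4)])
        then show False using join(2)[OF yP(3,1) xy(1)] x(2) by auto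
      qed
    qed
    have "join x ` {y\<in>S. I y l} \<subseteq> {l'\<in>M. I x l'}"
    proof
      fix k assume "k \<in> join x ` {y\<in>S. I y l}"
      then obtain y where y: "y \<in> S" "I y l" "k = join x y" by auto
      then have "x \<noteq> y" using x by auto
      then show "k \<in> {l'\<in>M. I x l'}" using joinM[OF x(1) y(1)] join(2)[OF SP'[OF x(1)] SP'[OF y(1)]] y by auto
    qed
    then have "card {y\<in>S. I y l} \<le> card {l'\<in>M. I x l'}"
      using card_inj_on_le[OF inj] finM by auto
    then show ?thesis using secle[OF x(1)] by linarith
  qed
  have step2: "card {l\<in>M. I w l} = n + 1 \<and> (\<forall>l\<in>M. I w l \<longrightarrow> card {x\<in>S. I x l} = n + 1)"
    if wS: "w \<in> S" for w
  proof -
    define A where "A = {l\<in>M. I w l}"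
    have finA: "finite A" using finM unfolding A_def by auto
    have U: "S - {w} = (\<Union>l\<in>A. {x\<in>S. I x l} - {w})"
    proof
      show "S - {w} \<subseteq> (\<Union>l\<in>A. {x\<in>S. I x l} - {w})"
      proof
        fix y assume y: "y \<in> S - {w}"
        then have "join w y \<in> A" "I y (join w y)"
          using joinM[OF wS, of y] join[OF SP'[OF wS] SP'[of y]] unfolding A_def by auto
        then show "y \<in> (\<Union>l\<in>A. {x\<in>S. I x l} - {w})" using y by auto
      qed
    qed auto
    have disj: "\<forall>l\<in>A. \<forall>l'\<in>A. l \<noteq> l' \<longrightarrow> ({x\<in>S. I x l} - {w}) \<inter> ({x\<in>S. I x l'} - {w}) = {}"
    proof (intro ballI impI)
      fix l l' assume ll: "l \<in> A" "l' \<in> A" "l \<noteq> l'"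
      show "({x\<in>S. I x l} - {w}) \<inter> ({x\<in>S. I x l'} - {w}) = {}"
      proof (rule ccontr)
        assume "\<not> ?thesis"
        then obtain y where "y \<in> S" "y \<noteq> w" "I y l" "I y l'" by auto
        then have "l = l'" using line_eq[OF SP'[OF wS] SP'[of y]] ll finM unfolding A_def by auto
        with ll show False by simp
      qed
    qed
    have cU: "card (S - {w}) = (\<Sum>l\<in>A. card ({x\<in>S. I x l} - {w}))"
      unfolding U by (rule card_UN_disjoint) (use finA finS disj in auto)
    have cS': "card (S - {w}) = n * n + n" using cS wS finS by (simp add: power2_eq_square)
    have trm: "card ({x\<in>S. I x l} - {w}) = card {x\<in>S. I x l} - 1" if "l \<in> A" for l
      using that wS finS unfolding A_def by (auto intro: card_Diff_singleton)
    have tle: "card ({x\<in>S. I x l} - {w}) \<le> n" if "l \<in> A" for l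
      using trm[OF that] upper[of l] that unfolding A_def by auto
    have "(\<Sum>l\<in>A. card ({x\<in>S. I x l} - {w})) \<le> card A * n"
      using sum_bounded_above[of A "\<lambda>l. card ({x\<in>S. I x l} - {w})" n] tle by auto
    then have "n * n + n \<le> card A * n" using cU cS' by simp
    moreover have "card A \<le> n + 1" using secle[OF wS] unfolding A_def .
    ultimately have cA: "card A = n + 1"
    proof -
      assume a: "n * n + n \<le> card A * n" "card A \<le> n + 1"
      have "(n + 1) * n \<le> card A * n" using a(1) by (simp add: algebra_simps)
      then have "0 < n \<longrightarrow> n + 1 \<le> card A" by (rule iffD1[OF mult_le_cancel2])
      then have "n + 1 \<le> card A" using n1 by simp
      then show ?thesis using a(2) by simp
    qed
    have "(\<Sum>l\<in>A. n - card ({x\<in>S. I x l} - {w})) = (\<Sum>l\<in>A. n) - (\<Sum>l\<in>A. card ({x\<in>S. I x l} - {w}))"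
      by (rule sum_subtractf_nat) (use tle in auto)
    also have "\<dots> = 0" using cA cU cS' by (simp add: algebra_simps)
    finally have "\<forall>l\<in>A. n - card ({x\<in>S. I x l} - {w}) = 0" using finA by simp
    then have eqn: "\<forall>l\<in>A. card ({x\<in>S. I x l} - {w}) = n" using tle by force
    have "\<forall>l\<in>M. I w l \<longrightarrow> card {x\<in>S. I x l} = n + 1"
    proof (intro ballI impI)
      fix l assume "l \<in> M" "I w l"
      then have "l \<in> A" "2 \<le> card {x\<in>S. I x l}" unfolding A_def M_def by auto
      then show "card {x\<in>S. I x l} = n + 1" using eqn trm by fastforce
    qed
    then show ?thesis using cA unfolding A_def by simp
  qed
  have lineM: "card {x\<in>S. I x l} = n + 1" if lMM: "l \<in> M" for l
  proof -
    have "2 \<le> card {x\<in>S. I x l}" using lMM unfolding M_def by auto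
    then obtain a b where "a \<in> {x\<in>S. I x l}" "b \<in> {x\<in>S. I x l}"
      using two_elems[of "{x\<in>S. I x l}"] by blast
    then show ?thesis using step2[of a] lMM by auto
  qed
  have ptM: "card {l\<in>M. I x l} = n + 1" if "x \<in> S" for x using step2[OF that] by simp
  have "(\<Sum>w\<in>S. card {l\<in>M. I w l}) = (\<Sum>l\<in>M. card {x\<in>S. I x l})"
    by (rule double_count[OF finS finM(1)])
  moreover have "(\<Sum>w\<in>S. card {l\<in>M. I w l}) = (\<Sum>w\<in>S. n + 1)"
    by (rule sum.cong) (simp_all add: ptM)
  moreover have "(\<Sum>l\<in>M. card {x\<in>S. I x l}) = (\<Sum>l\<in>M. n + 1)"
    by (rule sum.cong) (simp_all add: lineM)
  ultimately have "card S * (n + 1) = card M * (n + 1)" by simp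
  then have "card S = card M" by (simp only: mult_cancel2) simp
  then have cM: "card M = n^2 + n + 1" using cS by simp
  have meet: "\<exists>!x. x \<in> S \<and> I x l \<and> I x m" if lm: "l \<in> M" "m \<in> M" "l \<noteq> m" for l m
  proof -
    have LL: "l \<in> L" "m \<in> L" using lm finM by auto
    have uniq: "\<And>x y. x \<in> S \<and> I x l \<and> I x m \<Longrightarrow> y \<in> S \<and> I y l \<and> I y m \<Longrightarrow> x = y"
      using pt_ex[OF LL lm(3)] SP by blast
    obtain a b where ab: "a \<in> {x\<in>S. I x l}" "b \<in> {x\<in>S. I x l}" "a \<noteq> b"
      using two_elems[of "{x\<in>S. I x l}"] lineM[OF lm(1)] n1 by auto
    obtain x where x: "x \<in> S" "I x l" "\<not> I x m"
    proof -
      have "\<not> (I a m \<and> I b m)"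
        using line_eq[of a b l m] ab LL lm(3) SP by auto
      then show ?thesis using that ab by auto
    qed
    have inj: "inj_on (join x) {y\<in>S. I y m}"
    proof (rule inj_onI)
      fix y y' assume y: "y \<in> {y\<in>S. I y m}" "y' \<in> {y\<in>S. I y m}" "join x y = join x y'"
      show "y = y'"
      proof (rule ccontr)
        assume ne: "y \<noteq> y'"
        have xy: "x \<noteq> y" "x \<noteq> y'" using x y by auto
        have yS: "y \<in> S" "I y m" "y' \<in> S" "I y' m" using y(1,2) by auto
        have yP: "y \<in> P" "y' \<in> P" "x \<in> P" using SP yS x(1) by auto
        have lL: "m \<in> L" using LL by auto
        have j1: "I y' (join x y)" using join(3)[OF yP(3,2) xy(2)] y(3) by simp
        have "join x y = m"
          by (rule line_eq[OF yP(1,2) ne join(1)[OF yP(3,1) xy(1)] lL join(3)[OF yP(3,1) xy(1)] j1 yS(2,4)])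
        then show False using join(2)[OF yP(3,1) xy(1)] x(3) by auto
      qed
    qed
    have sub: "join x ` {y\<in>S. I y m} \<subseteq> {l'\<in>M. I x l'}"
    proof
      fix k assume "k \<in> join x ` {y\<in>S. I y m}"
      then obtain y where y: "y \<in> S" "I y m" "k = join x y" by auto
      then have "x \<noteq> y" using x by auto
      then show "k \<in> {l'\<in>M. I x l'}" using joinM[OF x(1) y(1)] join(2)[OF SP'[OF x(1)] SP'[OF y(1)]] y by auto
    qed
    have "card (join x ` {y\<in>S. I y m}) = card {l'\<in>M. I x l'}"
      using card_image[OF inj] lineM[OF lm(2)] ptM[OF x(1)] by simp
    then have "join x ` {y\<in>S. I y m} = {l'\<in>M. I x l'}"
      using card_subset_eq[OF _ sub] finM by auto
    then have "l \<in> join x ` {y\<in>S. I y m}" using lm x by auto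
    then obtain y where y: "y \<in> S" "I y m" "l = join x y" by auto
    then have "x \<noteq> y" using x by auto
    then have "I y l" using join(3)[OF SP'[OF x(1)] SP'[OF y(1)]] y by auto
    then show ?thesis using y uniq by blast
  qed
  have through: "\<exists>!l. l \<in> M \<and> I x l \<and> I y l" if "x \<in> S" "y \<in> S" "x \<noteq> y" for x y
    using joinM[OF that] join[OF SP'[OF that(1)] SP'[OF that(2)] that(3)]
      line_eq[OF SP'[OF that(1)] SP'[OF that(2)] that(3)] finM by blast
  have "projective_plane S M I n"
    unfolding projective_plane_def
    using finS finM cS cM lineM ptM through meet by auto
  then show ?thesis unfolding is_subplane_points_def using SP finM by auto
qed

end

theorem theorem4p4:
  fixes P :: "'p set" and L :: "'l set" and I :: "'p \<Rightarrow> 'l \<Rightarrow> bool"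
    and q n :: nat and U W :: "'v set" and \<phi> :: "'v \<Rightarrow> 'p"
  assumes "projective_plane P L I q"
    and "n > 1" and "n \<le> q"
    and "finite U" and "finite W" and "U \<inter> W = {}"
    and "card U = q - n" and "card W = n^2 + n + 1"
    and "graph_embedding (U \<union> W) (bipartite_edges U W) P L I \<phi>"
  shows "is_subplane_points P L I n (\<phi> ` W) \<or> collinear_set L I (\<phi> ` W)"
proof -
  interpret pplane P L I q by (rule pplane.intro) (rule assms(1))
  note emb = assms(9)[unfolded graph_embedding_def]
  define S where "S = \<phi> ` W"
  define E where "E = bipartite_edges U W"
  have SP: "S \<subseteq> P" using emb unfolding S_def by auto
  have injW: "inj_on \<phi> W" using emb inj_on_subset[of \<phi> "U \<union> W" W] by simp
  have cS: "card S = n^2 + n + 1" using card_image[OF injW] assms(8) unfolding S_def by simp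
  have injE: "inj_on (edge_line L I \<phi>) E" using emb unfolding E_def by auto
  have inE: "{u, w} \<in> E" if "u \<in> U" "w \<in> W" for u w
    using that unfolding E_def bipartite_edges_def by auto
  have phP: "\<phi> v \<in> P" if "v \<in> U \<union> W" for v using emb that by auto
  have phne: "\<phi> u \<noteq> \<phi> w" if "u \<in> U" "w \<in> W" for u w
  proof
    assume "\<phi> u = \<phi> w"
    then have "u = w" using emb that inj_onD[of \<phi> "U \<union> W" u w] by simp
    then show False using that assms(6) by auto
  qed
  have el: "edge_line L I \<phi> {u, w} = join (\<phi> u) (\<phi> w)" if "u \<in> U" "w \<in> W" for u w
    unfolding edge_line_def join_def by (rule arg_cong[where f=The]) auto
  have sec: "\<forall>x\<in>S. card {l\<in>L. I x l \<and> (\<exists>y\<in>S. y \<noteq> x \<and> I y l)} \<le> n + 1"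
  proof
    fix x assume "x \<in> S"
    then obtain w where w: "w \<in> W" "x = \<phi> w" unfolding S_def by auto
    define T where "T = {l\<in>L. I x l}"
    define Sec where "Sec = {l\<in>L. I x l \<and> (\<exists>y\<in>S. y \<noteq> x \<and> I y l)}"
    define g where "g u = edge_line L I \<phi> {u, w}" for u
    have xP: "x \<in> P" using phP w by auto
    have cT: "card T = q + 1" using pt_card[OF xP] unfolding T_def .
    have finT: "finite T" using finL unfolding T_def by auto
    have gj: "g u = join (\<phi> u) x" if "u \<in> U" for u using el[OF that w(1)] w unfolding g_def by simp
    have gprops: "g u \<in> L" "I (\<phi> u) (g u)" "I x (g u)" if "u \<in> U" for u
      using join[OF phP[of u] xP] that phne[OF that w(1)] w gj[OF that] by auto
    have inj: "inj_on g U"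
    proof (rule inj_onI)
      fix u u' assume uu: "u \<in> U" "u' \<in> U" "g u = g u'"
      then have "{u, w} = {u', w}" using inj_onD[OF injE _ inE[OF uu(1) w(1)] inE[OF uu(2) w(1)]]
        unfolding g_def by simp
      then show "u = u'" using uu w assms(6) by (auto simp: doubleton_eq_iff)
    qed
    have notsec: "g u \<notin> Sec" if u: "u \<in> U" for u
    proof
      assume "g u \<in> Sec"
      then obtain y where y: "y \<in> S" "y \<noteq> x" "I y (g u)" unfolding Sec_def by auto
      then obtain w' where w': "w' \<in> W" "y = \<phi> w'" unfolding S_def by auto
      have "join (\<phi> u) y = g u"
        using join_unique[OF phP[of u] phP[of w'] phne[OF u w'(1)] gprops(1,2)[OF u]] u w' y by auto
      then have "edge_line L I \<phi> {u, w'} = edge_line L I \<phi> {u, w}"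
        using el[OF u w'(1)] w' unfolding g_def by simp
      then have "{u, w'} = {u, w}" using inj_onD[OF injE _ inE[OF u w'(1)] inE[OF u w(1)]]
        by simp
      then have "w' = w" using u w w' assms(6) by (auto simp: doubleton_eq_iff)
      then show False using y w w' by simp
    qed
    have sub: "Sec \<union> g ` U \<subseteq> T" using gprops unfolding Sec_def T_def by auto
    have dis: "Sec \<inter> g ` U = {}" using notsec by auto
    have "card Sec + card (g ` U) = card (Sec \<union> g ` U)"
    proof -
      have "finite Sec" "finite (g ` U)" using sub finT finite_subset by auto
      then show ?thesis using card_Un_disjoint[OF _ _ dis] by simp
    qed
    also have "\<dots> \<le> card T" using card_mono[OF finT sub] .
    finally have "card Sec + (q - n) \<le> q + 1" using card_image[OF inj] assms(7) cT by simp
    then show "card {l\<in>L. I x l \<and> (\<exists>y\<in>S. y \<noteq> x \<and> I y l)} \<le> n + 1"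
      using assms(3) unfolding Sec_def by linarith
  qed
  show ?thesis
  proof (cases "collinear_set L I S")
    case True then show ?thesis unfolding S_def by simp
  next
    case False
    then show ?thesis using core[OF SP cS assms(2) sec] unfolding S_def by simp
  qed
qed

end
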